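(* Let $R\subseteq\mathbb{R}^2$ be open and let $f:R\to\mathbb{R}^2$ be $C^1$. Let $V$ be a connected component of $\mathbb{R}^2\setminus(f(S)\cup C(f))$ and let $N_0=\mathrm{Val}(f,V)$. Let $w_0\in\partial V\setminus\overline{f(S)}$. Then $\mathrm{Val}(f,w_0)\le N_0$.
   Context: Write $f=(u,v)$; $J_f=u_xv_y-u_yv_x$ and $S=\{z\in R: J_f(z)=0\}$. $C(f)$ is the set of finite points $\zeta\in\mathbb{R}^2$ for which there is a sequence $(z_n)\subset R$ converging to a point of $\partial R$ or with $|z_n|\to\infty$, such that $f(z_n)\to\zeta$. $\mathrm{Val}(f,w)$ is the number (possibly infinite) of distinct $z\in R$ with $f(z)=w$, and for a set $V$, $\mathrm{Val}(f,V)=\sup_{w\in V}\mathrm{Val}(f,w)$. *)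

theory Defs
  imports "HOL-Analysis.Analysis" "HOL-Library.Extended_Nat"
begin

definition is_C1_on :: "(real^2) set \<Rightarrow> (real^2 \<Rightarrow> real^2) \<Rightarrow> bool" where
  "is_C1_on R f \<longleftrightarrow> f differentiable_on R \<and> continuous_on R (\<lambda>z. jacobian f (at z))"

definition Jac :: "(real^2 \<Rightarrow> real^2) \<Rightarrow> real^2 \<Rightarrow> real" where
  "Jac f z = det (jacobian f (at z))"

definition crit_set :: "(real^2) set \<Rightarrow> (real^2 \<Rightarrow> real^2) \<Rightarrow> (real^2) set" where
  "crit_set R f = {z \<in> R. Jac f z = 0}"

definition cluster_set :: "(real^2) set \<Rightarrow> (real^2 \<Rightarrow> real^2) \<Rightarrow> (real^2) set" where
  "cluster_set R f = {\<zeta>. \<exists>zs :: nat \<Rightarrow> real^2. (\<forall>n. zs n \<in> R) \<and>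
      ((\<exists>p \<in> frontier R. zs \<longlonglongrightarrow> p) \<or> filterlim (\<lambda>n. norm (zs n)) at_top sequentially) \<and>
      (\<lambda>n. f (zs n)) \<longlonglongrightarrow> \<zeta>}"

definition Val :: "(real^2) set \<Rightarrow> (real^2 \<Rightarrow> real^2) \<Rightarrow> real^2 \<Rightarrow> enat" where
  "Val R f w = (if finite {z \<in> R. f z = w} then enat (card {z \<in> R. f z = w}) else \<infinity>)"

definition Val_set :: "(real^2) set \<Rightarrow> (real^2 \<Rightarrow> real^2) \<Rightarrow> (real^2) set \<Rightarrow> enat" where
  "Val_set R f V = (SUP w\<in>V. Val R f w)"

end

theory Submission
  imports Defs
begin

lemma local_open:
  fixes R :: "(real^2) set" and f :: "real^2 \<Rightarrow> real^2"
  assumes "open R" "is_C1_on R f" "z \<in> R" "Jac f z \<noteq> 0" "r > 0" "ball z r \<subseteq> R"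
  shows "\<exists>e>0. ball (f z) e \<subseteq> f ` ball z r"
proof -
  have dR: "f differentiable_on R" using assms(2) unfolding is_C1_on_def by auto
  have "f differentiable (at z)" using dR assms(1,3)
    by (simp add: differentiable_on_eq_differentiable_at)
  hence der: "(f has_derivative (\<lambda>h. (jacobian f (at z)) *v h)) (at z)"
    using jacobian_works by blast
  have "invertible (jacobian f (at z))" using assms(4) unfolding Jac_def
    by (simp add: invertible_det_nz)
  then obtain B where B: "jacobian f (at z) ** B = mat 1"
    unfolding invertible_def by blast
  have bl: "bounded_linear (\<lambda>h. B *v h)"
    using matrix_vector_mul_linear linear_conv_bounded_linear by blast
  have comp: "(\<lambda>h. (jacobian f (at z)) *v h) \<circ> (\<lambda>h. B *v h) = id"
    by (rule ext) (simp add: matrix_vector_mul_assoc B)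
  have "f z \<in> interior (f ` ball z r)"
    by (rule sussmann_open_mapping[OF assms(1) differentiable_imp_continuous_on[OF dR] assms(3) der bl comp assms(6)])
       (simp add: assms(5))
  thus ?thesis by (meson interior_subset open_contains_ball open_interior subset_trans)
qed

lemma key:
  fixes R :: "(real^2) set" and f :: "real^2 \<Rightarrow> real^2"
  assumes "open R" "is_C1_on R f"
    and "w0 \<in> closure V" "w0 \<notin> f ` crit_set R f"
    and "finite F" "F \<subseteq> {z \<in> R. f z = w0}"
  shows "\<exists>w\<in>V. enat (card F) \<le> Val R f w"
proof (cases "F = {}")
  case True
  obtain w where "w \<in> V" using assms(3) closure_empty by fastforce
  moreover have "enat (card F) = 0" using True by (simp add: zero_enat_def)
  ultimately show ?thesis by (metis zero_le)
next
  case Fne: False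
  have "\<forall>z\<in>F. \<exists>r>0. ball z r \<subseteq> R \<and> (\<forall>y\<in>F. y \<noteq> z \<longrightarrow> 2 * r \<le> dist z y)"
  proof
    fix z assume zF: "z \<in> F"
    obtain d where d: "d > 0" "\<forall>x\<in>F. x \<noteq> z \<longrightarrow> d \<le> dist z x"
      using finite_set_avoid[OF assms(5)] by blast
    obtain r0 where r0: "r0 > 0" "ball z r0 \<subseteq> R"
      using assms(1,6) zF open_contains_ball by blast
    show "\<exists>r>0. ball z r \<subseteq> R \<and> (\<forall>y\<in>F. y \<noteq> z \<longrightarrow> 2 * r \<le> dist z y)"
      using d r0 by (intro exI[of _ "min r0 (d/2)"]) auto
  qed
  then obtain r where r: "\<And>z. z \<in> F \<Longrightarrow> r z > 0 \<and> ball z (r z) \<subseteq> R \<and> (\<forall>y\<in>F. y \<noteq> z \<longrightarrow> 2 * r z \<le> dist z y)"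
    by metis
  have "\<forall>z\<in>F. \<exists>e>0. ball w0 e \<subseteq> f ` ball z (r z)"
  proof
    fix z assume zF: "z \<in> F"
    have zR: "z \<in> R" and fz: "f z = w0" using zF assms(6) by auto
    have "Jac f z \<noteq> 0" using assms(4) zR fz unfolding crit_set_def by auto
    then show "\<exists>e>0. ball w0 e \<subseteq> f ` ball z (r z)"
      using local_open[OF assms(1,2) zR] r[OF zF] fz by auto
  qed
  then obtain e where e: "\<And>z. z \<in> F \<Longrightarrow> e z > 0 \<and> ball w0 (e z) \<subseteq> f ` ball z (r z)"
    by metis
  define \<epsilon> where "\<epsilon> = Min (e ` F)"
  have epos: "\<epsilon> > 0" unfolding \<epsilon>_def using assms(5) Fne e by auto
  have ele: "\<And>z. z \<in> F \<Longrightarrow> \<epsilon> \<le> e z" unfolding \<epsilon>_def using assms(5) by auto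
  obtain w where wV: "w \<in> V" and dw: "dist w w0 < \<epsilon>"
    using assms(3) epos closure_approachable by blast
  have "\<forall>z\<in>F. \<exists>x. x \<in> ball z (r z) \<and> f x = w"
  proof
    fix z assume zF: "z \<in> F"
    have "w \<in> ball w0 (e z)" using dw ele[OF zF] by (simp add: dist_commute)
    then show "\<exists>x. x \<in> ball z (r z) \<and> f x = w" using e[OF zF] by blast
  qed
  then obtain g where g: "\<And>z. z \<in> F \<Longrightarrow> g z \<in> ball z (r z) \<and> f (g z) = w" by metis
  have inj: "inj_on g F"
  proof (rule inj_onI, rule ccontr)
    fix a b assume aF: "a \<in> F" and bF: "b \<in> F" and gab: "g a = g b" and ne: "a \<noteq> b"
    have "dist a b \<le> dist a (g a) + dist (g b) b" using gab dist_triangle[of a b "g a"]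
      by (simp add: dist_commute)
    also have "\<dots> < r a + r b" using g[OF aF] g[OF bF] by (simp add: dist_commute add_strict_mono)
    also have "\<dots> \<le> dist a b" using r[OF aF] r[OF bF] ne aF bF by (fastforce simp: dist_commute)
    finally show False by simp
  qed
  have sub: "g ` F \<subseteq> {x \<in> R. f x = w}"
  proof
    fix x assume "x \<in> g ` F"
    then obtain z where zF: "z \<in> F" and xz: "x = g z" by blast
    have "g z \<in> ball z (r z)" "f (g z) = w" using g[OF zF] by auto
    moreover have "ball z (r z) \<subseteq> R" using r[OF zF] by blast
    ultimately show "x \<in> {x \<in> R. f x = w}" using xz by blast
  qed
  have "enat (card F) \<le> Val R f w"
  proof (cases "finite {x \<in> R. f x = w}")
    case True
    have "card F = card (g ` F)" using inj by (simp add: card_image)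
    also have "\<dots> \<le> card {x \<in> R. f x = w}" using card_mono[OF True sub] .
    finally show ?thesis using True unfolding Val_def by simp
  next
    case False then show ?thesis unfolding Val_def by simp
  qed
  then show ?thesis using wV by blast
qed

theorem theorem3p7:
  fixes R :: "(real^2) set" and f :: "real^2 \<Rightarrow> real^2"
    and V :: "(real^2) set" and w0 :: "real^2"
  assumes "open R"
    and "is_C1_on R f"
    and "V \<in> components (UNIV - (f ` crit_set R f \<union> cluster_set R f))"
    and "w0 \<in> frontier V - closure (f ` crit_set R f)"
  shows "Val R f w0 \<le> Val_set R f V"
proof -
  have cl: "w0 \<in> closure V" using assms(4) frontier_def by auto
  have nc: "w0 \<notin> f ` crit_set R f" using assms(4) closure_subset by blast
  have K: "\<And>F. finite F \<Longrightarrow> F \<subseteq> {z \<in> R. f z = w0} \<Longrightarrow> enat (card F) \<le> Val_set R f V"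
  proof -
    fix F :: "(real^2) set" assume "finite F" "F \<subseteq> {z \<in> R. f z = w0}"
    then obtain w where "w \<in> V" "enat (card F) \<le> Val R f w"
      using key[OF assms(1,2) cl nc] by blast
    then show "enat (card F) \<le> Val_set R f V" unfolding Val_set_def
      by (rule SUP_upper2)
  qed
  show ?thesis
  proof (cases "finite {z \<in> R. f z = w0}")
    case True
    then show ?thesis using K[OF True order_refl] unfolding Val_def by simp
  next
    case False
    have "Val_set R f V = \<infinity>"
    proof (rule ccontr)
      assume "Val_set R f V \<noteq> \<infinity>"
      then obtain m where m: "Val_set R f V = enat m" by auto
      obtain F where F: "finite F" "card F = Suc m" "F \<subseteq> {z \<in> R. f z = w0}"
        using infinite_arbitrarily_large[OF False] by blast
      have "enat (Suc m) \<le> enat m" using K[OF F(1) F(3)] F(2) m by simp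
      then show False by simp
    qed
    then show ?thesis by simp
  qed
qed

end
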